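(* Consider the bipartite Bell scenario $(2,2,2)$ with Alice's measurements $A_1,A_2$ and Bob's measurements $B_1,B_2$, all with outcomes in $\{0,1\}$. A nondisturbing behavior for this scenario is logically contextual if and only if there exist indices $i,k,j,\ell\in\{1,2\}$ with $i\neq k$ and $j\neq\ell$, and $(a,b),(\alpha_1,\alpha_2)\in\{0,1\}^2$ such that $p_{ij}(a,b)>0$, $p_{kj}(\alpha_1,b)=0$, $p_{i\ell}(a,\alpha_2)=0$, $p_{k\ell}(\lnot\alpha_1,\lnot\alpha_2)=0$, where $\lnot x=1-x$.
   Context: The contexts of the scenario are $\{A_\mu,B_\nu\}$ for $\mu,\nu\in\{1,2\}$; a behavior is a family of probability distributions $p_{\mu\nu}$ on $\{0,1\}^2$, where $p_{\mu\nu}(x,y)$ is the probability that $A_\mu=x$ and $B_\nu=y$. It is nondisturbing if the marginal distribution of each measurement is the same in every context containing it. Let $\bar p_{\mu\nu}(x,y)=1$ if $p_{\mu\nu}(x,y)>0$, else $0$. The behavior is logically noncontextual (logically local) if there exists $\bar p:\{0,1\}^{\{A_1,A_2,B_1,B_2\}}\to\{0,1\}$ such that for every context $\{A_\mu,B_\nu\}$ and $(x,y)$, $\max\{\bar p(t): t(A_\mu)=x,\ t(B_\nu)=y\}=\bar p_{\mu\nu}(x,y)$; otherwise it is logically contextual. *)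

theory Defs
  imports Complex_Main
begin

text \<open>Bell scenario (2,2,2). Measurement settings indices {1,2} and outcomes {0,1}
  are both encoded by bool (False ~ 1 / 0, True ~ 2 / 1).\<close>

datatype meas = A bool | B bool

text \<open>A behavior: p mu nu x y = probability that A_mu = x and B_nu = y in context {A_mu, B_nu}.\<close>
type_synonym behavior = "bool \<Rightarrow> bool \<Rightarrow> bool \<Rightarrow> bool \<Rightarrow> real"

definition is_behavior :: "behavior \<Rightarrow> bool" where
  "is_behavior p \<longleftrightarrow>
     (\<forall>mu nu x y. 0 \<le> p mu nu x y) \<and>
     (\<forall>mu nu. (\<Sum>x\<in>UNIV. \<Sum>y\<in>UNIV. p mu nu x y) = 1)"

definition nondisturbing :: "behavior \<Rightarrow> bool" where
  "nondisturbing p \<longleftrightarrow>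
     (\<forall>mu nu nu' x. (\<Sum>y\<in>UNIV. p mu nu x y) = (\<Sum>y\<in>UNIV. p mu nu' x y)) \<and>
     (\<forall>nu mu mu' y. (\<Sum>x\<in>UNIV. p mu nu x y) = (\<Sum>x\<in>UNIV. p mu' nu x y))"

definition pbar :: "behavior \<Rightarrow> bool \<Rightarrow> bool \<Rightarrow> bool \<Rightarrow> bool \<Rightarrow> nat" where
  "pbar p mu nu x y = (if p mu nu x y > 0 then 1 else 0)"

definition logically_noncontextual :: "behavior \<Rightarrow> bool" where
  "logically_noncontextual p \<longleftrightarrow>
     (\<exists>g :: (meas \<Rightarrow> bool) \<Rightarrow> nat. (\<forall>t. g t \<in> {0,1}) \<and>
        (\<forall>mu nu x y. Max {g t | t. t (A mu) = x \<and> t (B nu) = y} = pbar p mu nu x y))"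

definition logically_contextual :: "behavior \<Rightarrow> bool" where
  "logically_contextual p \<longleftrightarrow> \<not> logically_noncontextual p"

end

theory Submission
  imports Defs
begin

definition ext_prop :: "behavior \<Rightarrow> bool" where
  "ext_prop p \<longleftrightarrow> (\<forall>i j a b. p i j a b > 0 \<longrightarrow>
     (\<exists>c d. p (\<not>i) j c b > 0 \<and> p i (\<not>j) a d > 0 \<and> p (\<not>i) (\<not>j) c d > 0))"

lemma nc_ext:
  assumes "logically_noncontextual p" shows "ext_prop p"
  unfolding ext_prop_def
proof (intro allI impI)
  fix i j a b assume pos: "p i j a b > 0"
  from assms obtain g :: "(meas \<Rightarrow> bool) \<Rightarrow> nat" where g01: "\<forall>t. g t \<in> {0,1}"
    and gM: "\<forall>mu nu x y. Max {g t | t. t (A mu) = x \<and> t (B nu) = y} = pbar p mu nu x y"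
    unfolding logically_noncontextual_def by blast
  have fin: "finite {g t | t. t (A mu) = x \<and> t (B nu) = y}" for mu nu x y
  proof -
    have "{g t | t. t (A mu) = x \<and> t (B nu) = y} \<subseteq> {0,1}"
    proof
      fix s assume "s \<in> {g t | t. t (A mu) = x \<and> t (B nu) = y}"
      then obtain t where "s = g t" by blast
      then show "s \<in> {0,1}" using g01 by simp
    qed
    then show ?thesis by (rule finite_subset) simp
  qed
  have ne: "{g t | t. t (A mu) = x \<and> t (B nu) = y} \<noteq> {}" for mu nu x y
  proof -
    have "g (\<lambda>m. case m of A _ \<Rightarrow> x | B _ \<Rightarrow> y) \<in> {g t | t. t (A mu) = x \<and> t (B nu) = y}" by auto
    then show ?thesis by blast
  qed
  have "Max {g t | t. t (A i) = a \<and> t (B j) = b} = 1" using gM pos by (simp add: pbar_def)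
  moreover have "Max {g t | t. t (A i) = a \<and> t (B j) = b} \<in> {g t | t. t (A i) = a \<and> t (B j) = b}"
    by (rule Max_in[OF fin ne])
  ultimately have "1 \<in> {g t | t. t (A i) = a \<and> t (B j) = b}" by simp
  then obtain t where t: "g t = 1" "t (A i) = a" "t (B j) = b" by auto
  have tp: "p mu nu (t (A mu)) (t (B nu)) > 0" for mu nu
  proof -
    have "g t \<le> Max {g t' | t'. t' (A mu) = t (A mu) \<and> t' (B nu) = t (B nu)}"
      by (rule Max_ge[OF fin]) auto
    then have "pbar p mu nu (t (A mu)) (t (B nu)) \<ge> 1" using gM t(1) by simp
    then show ?thesis by (simp add: pbar_def split: if_splits)
  qed
  then show "\<exists>c d. p (\<not>i) j c b > 0 \<and> p i (\<not>j) a d > 0 \<and> p (\<not>i) (\<not>j) c d > 0"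
    using tp[of "\<not>i" j] tp[of i "\<not>j"] tp[of "\<not>i" "\<not>j"] t(2,3) by blast
qed

lemma ext_nc:
  assumes "ext_prop p" shows "logically_noncontextual p"
  unfolding logically_noncontextual_def
proof (intro exI conjI allI)
  define g :: "(meas \<Rightarrow> bool) \<Rightarrow> nat" where
    "g t = (if \<forall>mu nu. p mu nu (t (A mu)) (t (B nu)) > 0 then 1 else 0)" for t
  show "g t \<in> {0,1}" for t by (simp add: g_def)
  fix mu nu x y
  let ?S = "{g t | t. t (A mu) = x \<and> t (B nu) = y}"
  have fin: "finite ?S"
    by (rule finite_subset[of _ "{0,1}"]) (auto simp: g_def)
  show "Max ?S = pbar p mu nu x y"
  proof (cases "p mu nu x y > 0")
    case True
    then obtain c d where cd: "p (\<not>mu) nu c y > 0" "p mu (\<not>nu) x d > 0" "p (\<not>mu) (\<not>nu) c d > 0"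
      using assms unfolding ext_prop_def by blast
    define t where "t m = (case m of A m' \<Rightarrow> (if m' = mu then x else c) | B n' \<Rightarrow> (if n' = nu then y else d))" for m
    have "\<forall>m n. p m n (t (A m)) (t (B n)) > 0"
    proof (intro allI)
      fix m n
      have tA: "t (A m) = (if m = mu then x else c)" and tB: "t (B n) = (if n = nu then y else d)"
        by (simp_all add: t_def)
      have "m = mu \<or> m = (\<not>mu)" "n = nu \<or> n = (\<not>nu)" by auto
      then show "p m n (t (A m)) (t (B n)) > 0"
        using True cd unfolding tA tB by (elim disjE) simp_all
    qed
    then have "g t = 1" by (simp add: g_def)
    moreover have "t (A mu) = x" "t (B nu) = y" by (simp_all add: t_def)
    then have "g t \<in> ?S" by blast
    with \<open>g t = 1\<close> have "1 \<in> ?S" by simp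
    moreover have "\<forall>s\<in>?S. s \<le> 1" by (auto simp: g_def)
    ultimately have "Max ?S = 1"
      by (intro Max_eqI fin) auto
    then show ?thesis using True by (simp add: pbar_def)
  next
    case False
    have "?S = {0}"
    proof
      show "?S \<subseteq> {0}" using False by (auto simp: g_def)
      have "g (\<lambda>m. case m of A _ \<Rightarrow> x | B _ \<Rightarrow> y) = 0" using False
        unfolding g_def by auto
      moreover have "(\<lambda>m. case m of A _ \<Rightarrow> x | B _ \<Rightarrow> y) (A mu) = x"
        "(\<lambda>m. case m of A _ \<Rightarrow> x | B _ \<Rightarrow> y) (B nu) = y" by simp_all
      then have "g (\<lambda>m. case m of A _ \<Rightarrow> x | B _ \<Rightarrow> y) \<in> ?S" by blast
      ultimately show "{0} \<subseteq> ?S" by simp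
    qed
    then show ?thesis using False by (simp add: pbar_def)
  qed
qed

theorem corollary1:
  fixes p :: behavior
  assumes "is_behavior p" and "nondisturbing p"
  shows "logically_contextual p \<longleftrightarrow>
    (\<exists>i k j l a b \<alpha>1 \<alpha>2. i \<noteq> k \<and> j \<noteq> l \<and>
       p i j a b > 0 \<and> p k j \<alpha>1 b = 0 \<and> p i l a \<alpha>2 = 0 \<and> p k l (\<not> \<alpha>1) (\<not> \<alpha>2) = 0)"
proof -
  let ?C = "(\<exists>i k j l a b \<alpha>1 \<alpha>2. i \<noteq> k \<and> j \<noteq> l \<and>
       p i j a b > 0 \<and> p k j \<alpha>1 b = 0 \<and> p i l a \<alpha>2 = 0 \<and> p k l (\<not> \<alpha>1) (\<not> \<alpha>2) = 0)"
  have nn: "\<And>mu nu x y. 0 \<le> p mu nu x y" and sm: "\<And>mu nu. p mu nu False False + p mu nu False True + p mu nu True False + p mu nu True True = 1"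
    using assms(1) unfolding is_behavior_def by (auto simp: UNIV_bool add.assoc)
  have mA: "\<And>mu nu nu' x. p mu nu x False + p mu nu x True = p mu nu' x False + p mu nu' x True"
   and mB: "\<And>mu mu' nu y. p mu nu False y + p mu nu True y = p mu' nu False y + p mu' nu True y"
    using assms(2) unfolding nondisturbing_def by (auto simp: UNIV_bool)
  have "logically_contextual p \<longleftrightarrow> \<not> ext_prop p"
    unfolding logically_contextual_def using nc_ext ext_nc by blast
  also have "\<dots> \<longleftrightarrow> ?C"
  proof
    assume "\<not> ext_prop p"
    then obtain i j a b where pos: "p i j a b > 0" and H: "\<And>c d. \<not> (p (\<not>i) j c b > 0 \<and> p i (\<not>j) a d > 0 \<and> p (\<not>i) (\<not>j) c d > 0)"
      unfolding ext_prop_def by blast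
    have H': "p (\<not>i) j c b = 0 \<or> p i (\<not>j) a d = 0 \<or> p (\<not>i) (\<not>j) c d = 0" for c d
      using H[of c d] nn[of "\<not>i" j c b] nn[of i "\<not>j" a d] nn[of "\<not>i" "\<not>j" c d] by (simp add: less_le)
    have le: "(f x :: real) \<le> f False + f True" if "\<forall>z. 0 \<le> f z" for f x
    proof -
      have "0 \<le> f False" "0 \<le> f True" using that by auto
      then show ?thesis by (cases x) simp_all
    qed
    have bsum: "\<exists>z. f z > 0" if "(f False + f True :: real) > 0" for f
    proof -
      have "f False > 0 \<or> f True > 0" using that by linarith
      then show ?thesis by blast
    qed
    have "p (\<not>i) j False b + p (\<not>i) j True b > 0"
      using mB[of i j b "\<not>i"] le[of "\<lambda>z. p i j z b" a] nn pos by simp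
    then obtain c0 where c0: "p (\<not>i) j c0 b > 0" using bsum[of "\<lambda>z. p (\<not>i) j z b"] by blast
    have "p i (\<not>j) a False + p i (\<not>j) a True > 0"
      using mA[of i j a "\<not>j"] le[of "\<lambda>z. p i j a z" b] nn pos by simp
    then obtain d0 where d0: "p i (\<not>j) a d0 > 0" using bsum[of "\<lambda>z. p i (\<not>j) a z"] by blast
    have ii: "i \<noteq> (\<not>i)" "j \<noteq> (\<not>j)" by auto
    consider (c1) "p (\<not>i) j (\<not>c0) b = 0 \<and> p i (\<not>j) a (\<not>d0) = 0"
      | (c2) "p (\<not>i) j (\<not>c0) b > 0" | (c3) "p i (\<not>j) a (\<not>d0) > 0"
      using nn by (metis less_le)
    then show ?C
    proof cases
      case c1
      have "p (\<not>i) (\<not>j) c0 d0 = 0" using H'[of c0 d0] c0 d0 by linarith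
      then have "p (\<not>i) (\<not>j) (\<not>\<not>c0) (\<not>\<not>d0) = 0" by simp
      then show ?C
        apply (rule_tac exI[of _ i], rule_tac exI[of _ "\<not>i"], rule_tac exI[of _ j], rule_tac exI[of _ "\<not>j"])
        apply (rule_tac exI[of _ a], rule_tac exI[of _ b], rule_tac exI[of _ "\<not>c0"], rule_tac exI[of _ "\<not>d0"])
        using c1 pos by simp
    next
      case c2
      have allc: "p (\<not>i) j c b > 0" for c using c0 c2 by (cases "c = c0") auto
      have z: "p (\<not>i) (\<not>j) c d0 = 0" for c using H'[of c d0] allc[of c] d0 by linarith
      have "p i (\<not>j) False d0 + p i (\<not>j) True d0 > 0"
        using le[of "\<lambda>z. p i (\<not>j) z d0" a] nn d0 by (metis order_less_le_trans)
      then have False using mB[of i "\<not>j" d0 "\<not>i"] z[of False] z[of True] by linarith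
      then show ?C ..
    next
      case c3
      have alld: "p i (\<not>j) a d > 0" for d using d0 c3 by (cases "d = d0") auto
      have z: "p (\<not>i) (\<not>j) c0 d = 0" for d using H'[of c0 d] alld[of d] c0 by linarith
      have "p (\<not>i) j c0 False + p (\<not>i) j c0 True > 0"
        using le[of "\<lambda>z. p (\<not>i) j c0 z" b] nn c0 by (metis order_less_le_trans)
      then have False using mA[of "\<not>i" j c0 "\<not>j"] z[of False] z[of True] by linarith
      then show ?C ..
    qed
  next
    assume ?C
    then obtain i k j l a b a1 a2 where h: "i \<noteq> k" "j \<noteq> l" "p i j a b > 0" "p k j a1 b = 0"
      "p i l a a2 = 0" "p k l (\<not> a1) (\<not> a2) = 0" by blast
    have kl: "k = (\<not>i)" "l = (\<not>j)" using h(1,2) by auto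
    show "\<not> ext_prop p"
    proof
      assume "ext_prop p"
      then obtain c d where cd: "p (\<not>i) j c b > 0" "p i (\<not>j) a d > 0" "p (\<not>i) (\<not>j) c d > 0"
        using h(3) unfolding ext_prop_def by blast
      have h4: "p (\<not>i) j a1 b = 0" "p i (\<not>j) a a2 = 0" "p (\<not>i) (\<not>j) (\<not> a1) (\<not> a2) = 0"
        using h(4,5,6) unfolding kl by simp_all
      have "c \<noteq> a1"
      proof
        assume "c = a1" then show False using cd(1) h4(1) by simp
      qed
      moreover have "d \<noteq> a2"
      proof
        assume "d = a2" then show False using cd(2) h4(2) by simp
      qed
      ultimately have "c = (\<not>a1)" "d = (\<not>a2)" by auto
      then show False using cd(3) h4(3) by simp
    qed
  qed
  finally show ?thesis .
qed

end
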